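(* Let $G$ be a $K_4$-free disk graph, let $\mathsf{opt}>0$ be the minimum size of an odd cycle transversal of $G$, let $\mathcal{T}$ be a maximal packing of the triangles of $G$, and let $\mathcal{O}$ be the set of triangles $T$ of $G$ with $T\not\subseteq V(\mathcal{T})$. Let $\mathsf{tri}(\mathcal{O})$ be the maximum size of a packing of $\mathcal{O}$, and put $a=|\mathcal{T}|/\mathsf{opt}$, $b=\mathsf{tri}(\mathcal{O})/\mathsf{opt}$. Let $d$ be the average degree of $G[V(\mathcal{T})]$. Let $1\le\rho_0\le 3$. Independently for each $T\in\mathcal{T}$ choose $v_T\in T$ uniformly at random, and let $R=\bigcup_{T\in\mathcal{T}}(T\setminus\{v_T\})$. Let $\mathcal{T}'$ be any maximal packing of the triangles of $G-R$, let $X_2$ be an odd cycle transversal of $G-(R\cup V(\mathcal{T}'))$ of size at most $\rho_0$ times the minimum size of an odd cycle transversal of that graph, and set $S_2=R\cup V(\mathcal{T}')\cup X_2$. Then $$\mathbb{E}[|S_2|]\le \Big(\rho_0+\big(1-(\tfrac13)^{\frac38 d+\frac14}\big)(3-\rho_0)\,a+(3-\rho_0)\,b\Big)\cdot\mathsf{opt}.$$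
   Context: A disk graph is the intersection graph of a finite set of closed disks in the plane; $K_4$-free means no complete subgraph on 4 vertices. An odd cycle transversal of $G$ is a set $S\subseteq V(G)$ with $G-S$ bipartite. A triangle is a set of three pairwise adjacent vertices; a packing of a family of triangles is a subfamily of pairwise vertex-disjoint triangles, maximal if no further triangle of the family can be added; $V(\mathcal{T})$ denotes the union of the triangles in $\mathcal{T}$. In the paper $X_2$ is produced by a $\rho_0$-approximation algorithm for \textsc{Bipartization} on planar graphs. *)

theory Defs
  imports "HOL-Analysis.Analysis" "HOL-Library.FuncSet"
begin

text \<open>Graphs: a finite vertex set V and an adjacency predicate E (only its
restriction to V matters). G - S is represented by the vertex set V - S
with the same adjacency (induced subgraph).\<close>

definition disk_graph :: "'a set \<Rightarrow> ('a \<Rightarrow> 'a \<Rightarrow> bool) \<Rightarrow> bool" where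
  "disk_graph V E \<longleftrightarrow> finite V \<and>
     (\<exists>(c :: 'a \<Rightarrow> complex) (r :: 'a \<Rightarrow> real).
        (\<forall>v\<in>V. r v > 0) \<and> inj_on (\<lambda>v. (c v, r v)) V \<and>
        (\<forall>u\<in>V. \<forall>v\<in>V. E u v \<longleftrightarrow> u \<noteq> v \<and> dist (c u) (c v) \<le> r u + r v))"

definition K4_free :: "'a set \<Rightarrow> ('a \<Rightarrow> 'a \<Rightarrow> bool) \<Rightarrow> bool" where
  "K4_free V E \<longleftrightarrow> \<not> (\<exists>w\<in>V. \<exists>x\<in>V. \<exists>y\<in>V. \<exists>z\<in>V.
      distinct [w, x, y, z] \<and> E w x \<and> E w y \<and> E w z \<and> E x y \<and> E x z \<and> E y z)"

definition triangles :: "'a set \<Rightarrow> ('a \<Rightarrow> 'a \<Rightarrow> bool) \<Rightarrow> 'a set set" where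
  "triangles W E = {T. \<exists>x\<in>W. \<exists>y\<in>W. \<exists>z\<in>W. T = {x, y, z} \<and> distinct [x, y, z]
                          \<and> E x y \<and> E x z \<and> E y z}"

definition bipartite :: "'a set \<Rightarrow> ('a \<Rightarrow> 'a \<Rightarrow> bool) \<Rightarrow> bool" where
  "bipartite W E \<longleftrightarrow> (\<exists>A \<subseteq> W. \<forall>u\<in>W. \<forall>v\<in>W. E u v \<longrightarrow> (u \<in> A \<longleftrightarrow> v \<notin> A))"

definition is_oct :: "'a set \<Rightarrow> ('a \<Rightarrow> 'a \<Rightarrow> bool) \<Rightarrow> 'a set \<Rightarrow> bool" where
  "is_oct W E S \<longleftrightarrow> S \<subseteq> W \<and> bipartite (W - S) E"

definition oct_num :: "'a set \<Rightarrow> ('a \<Rightarrow> 'a \<Rightarrow> bool) \<Rightarrow> nat" where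
  "oct_num W E = Min {card S | S. is_oct W E S}"

definition packing :: "'a set set \<Rightarrow> 'a set set \<Rightarrow> bool" where
  "packing F P \<longleftrightarrow> P \<subseteq> F \<and> (\<forall>T1\<in>P. \<forall>T2\<in>P. T1 \<noteq> T2 \<longrightarrow> T1 \<inter> T2 = {})"

definition maximal_packing :: "'a set set \<Rightarrow> 'a set set \<Rightarrow> bool" where
  "maximal_packing F P \<longleftrightarrow> packing F P \<and>
     \<not> (\<exists>T\<in>F - P. packing F (insert T P))"

definition tri_num :: "'a set set \<Rightarrow> nat" where
  "tri_num F = Max {card P | P. packing F P}"

text \<open>Average degree of the induced subgraph G[U] (0 if U is empty).\<close>
definition avg_degree :: "'a set \<Rightarrow> ('a \<Rightarrow> 'a \<Rightarrow> bool) \<Rightarrow> real" where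
  "avg_degree U E = (\<Sum>v\<in>U. real (card {u\<in>U. E v u})) / real (card U)"

end

theory Submission
  imports Defs
begin

locale L0 =
  fixes V :: "'a set" and E :: "'a \<Rightarrow> 'a \<Rightarrow> bool" and TT :: "'a set set"
    and X :: "'a set" and \<rho>0 :: real
  assumes finV: "finite V"
    and symE: "\<And>u v. u \<in> V \<Longrightarrow> v \<in> V \<Longrightarrow> E u v = E v u"
    and irrE: "\<And>v. v \<in> V \<Longrightarrow> \<not> E v v"
    and k4: "K4_free V E"
    and packT: "packing (triangles V E) TT"
    and Xoct: "is_oct V E X"
    and rho1: "1 \<le> \<rho>0" and rho3: "\<rho>0 \<le> 3"
begin

lemma tri_props:
  assumes "t \<in> triangles W E" "W \<subseteq> V"
  shows "t \<subseteq> W" "card t = 3" "\<And>a b. a \<in> t \<Longrightarrow> b \<in> t \<Longrightarrow> a \<noteq> b \<Longrightarrow> E a b"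
proof -
  obtain x y z where t: "x \<in> W" "y \<in> W" "z \<in> W" "t = {x,y,z}" "distinct [x,y,z]"
    "E x y" "E x z" "E y z" using assms(1) unfolding triangles_def by blast
  have V: "x \<in> V" "y \<in> V" "z \<in> V" using t assms(2) by auto
  show "t \<subseteq> W" using t by auto
  show "card t = 3" using t by auto
  fix a b assume "a \<in> t" "b \<in> t" "a \<noteq> b"
  then show "E a b" using t V symE by auto
qed

lemma tri_mono: "W \<subseteq> V \<Longrightarrow> triangles W E \<subseteq> triangles V E"
  unfolding triangles_def by blast

lemma tri_meets_X:
  assumes "t \<in> triangles V E" shows "t \<inter> X \<noteq> {}"
proof
  assume emp: "t \<inter> X = {}"
  obtain x y z where t: "x \<in> V" "y \<in> V" "z \<in> V" "t = {x,y,z}" "distinct [x,y,z]"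
    "E x y" "E x z" "E y z" using assms unfolding triangles_def by blast
  obtain A where A: "A \<subseteq> V - X" "\<forall>u\<in>V - X. \<forall>v\<in>V - X. E u v \<longrightarrow> (u \<in> A \<longleftrightarrow> v \<notin> A)"
    using Xoct unfolding is_oct_def bipartite_def by blast
  have "x \<in> V - X" "y \<in> V - X" "z \<in> V - X" using t emp by auto
  then show False using A(2) t by metis
qed

lemma finTT: "finite TT"
proof -
  have "TT \<subseteq> Pow V" using packT tri_props(1)[of _ V] unfolding packing_def by blast
  then show ?thesis using finV by (meson finite_Pow_iff finite_subset)
qed

lemma TT_tri: "T \<in> TT \<Longrightarrow> T \<in> triangles V E" using packT unfolding packing_def by blast
lemma TT_sub: "T \<in> TT \<Longrightarrow> T \<subseteq> V" using TT_tri tri_props(1) by blast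
lemma TT_card: "T \<in> TT \<Longrightarrow> card T = 3" using TT_tri tri_props(2) by blast
lemma TT_fin: "T \<in> TT \<Longrightarrow> finite T" using TT_card card_ge_0_finite by force
lemma TT_disj: "T1 \<in> TT \<Longrightarrow> T2 \<in> TT \<Longrightarrow> T1 \<noteq> T2 \<Longrightarrow> T1 \<inter> T2 = {}"
  using packT unfolding packing_def by blast
lemma TT_E: "T \<in> TT \<Longrightarrow> a \<in> T \<Longrightarrow> b \<in> T \<Longrightarrow> a \<noteq> b \<Longrightarrow> E a b"
  using TT_tri tri_props(3) by blast

lemma K4_bound:
  assumes "T2 \<in> TT" "v \<in> V" "v \<notin> T2"
  shows "card (T2 \<inter> {x. E v x}) \<le> 2"
proof (rule ccontr)
  assume "\<not> ?thesis"
  then have "card (T2 \<inter> {x. E v x}) \<ge> 3" by simp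
  moreover have "card (T2 \<inter> {x. E v x}) \<le> card T2" using TT_fin[OF assms(1)] by (simp add: card_mono)
  ultimately have "T2 \<inter> {x. E v x} = T2" using TT_card[OF assms(1)] TT_fin[OF assms(1)]
    by (metis Int_lower1 card_seteq)
  then have all: "\<forall>x\<in>T2. E v x" by blast
  obtain x y z where t: "x \<in> V" "y \<in> V" "z \<in> V" "T2 = {x,y,z}" "distinct [x,y,z]"
    "E x y" "E x z" "E y z" using TT_tri[OF assms(1)] unfolding triangles_def by blast
  have "distinct [v,x,y,z]" using t assms(3) by auto
  moreover have "E v x" "E v y" "E v z" using all t by auto
  ultimately show False using k4 t assms(2) unfolding K4_free_def by blast
qed


definition "VT = \<Union>TT"
definition "\<Omega> = (\<Pi>\<^sub>E T\<in>TT. T)"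
definition "Rs \<sigma> = (\<Union>T\<in>TT. T - {\<sigma> T})"
definition "bad T \<sigma> \<longleftrightarrow> (\<exists>T2\<in>TT. T2 \<noteq> T \<and> \<sigma> T2 \<in> X \<and> E (\<sigma> T) (\<sigma> T2))"
definition "cc = (3 - \<rho>0) / 2"
definition "Q T \<sigma> = 2 - \<rho>0 * real (card (X \<inter> (T - {\<sigma> T}))) + cc * (if \<sigma> T \<notin> X \<and> bad T \<sigma> then 1 else 0)"

lemma finX: "finite X" using Xoct finV unfolding is_oct_def by (meson finite_subset)
lemma XV: "X \<subseteq> V" using Xoct unfolding is_oct_def by blast
lemma VTV: "VT \<subseteq> V" unfolding VT_def using TT_sub by blast

lemma sigma_bound:
  assumes sig: "\<sigma> \<in> \<Omega>"
    and TpP: "packing (triangles (V - Rs \<sigma>) E) P"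
    and Y: "is_oct (V - (Rs \<sigma> \<union> \<Union>P)) E Y"
           "real (card Y) \<le> \<rho>0 * real (oct_num (V - (Rs \<sigma> \<union> \<Union>P)) E)"
  shows "real (card (Rs \<sigma> \<union> \<Union>P \<union> Y)) \<le> \<rho>0 * card X
          + (3-\<rho>0) * tri_num {T \<in> triangles V E. \<not> T \<subseteq> VT} + (\<Sum>T\<in>TT. Q T \<sigma>)"
proof -
  define R where "R = Rs \<sigma>"
  define U where "U = \<Union>P"
  define W where "W = V - (R \<union> U)"
  define n where "n = card TT"
  have sigT: "\<And>T. T \<in> TT \<Longrightarrow> \<sigma> T \<in> T" using sig by (auto simp: \<Omega>_def PiE_def Pi_def)
  have RV: "R \<subseteq> VT" unfolding R_def Rs_def VT_def by blast
  have Psub: "P \<subseteq> triangles (V - R) E" using TpP unfolding packing_def R_def by blast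
  have Ptri: "\<And>t. t \<in> P \<Longrightarrow> t \<subseteq> V - R \<and> card t = 3 \<and> t \<in> triangles V E"
  proof -
    fix t assume "t \<in> P"
    then have t: "t \<in> triangles (V - R) E" using Psub by blast
    show "t \<subseteq> V - R \<and> card t = 3 \<and> t \<in> triangles V E"
      using tri_props(1,2)[OF t Diff_subset] tri_mono[OF Diff_subset] t by blast
  qed
  have Pdisj: "\<And>t1 t2. t1 \<in> P \<Longrightarrow> t2 \<in> P \<Longrightarrow> t1 \<noteq> t2 \<Longrightarrow> t1 \<inter> t2 = {}"
    using TpP unfolding packing_def by blast
  have finP: "finite P"
  proof -
    have "P \<subseteq> Pow V" using Ptri by blast
    then show ?thesis using finV by (meson finite_Pow_iff finite_subset)
  qed
  have finPt: "\<And>t. t \<in> P \<Longrightarrow> finite t" using Ptri by (metis card_ge_0_finite zero_less_numeral)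
  have UV: "U \<subseteq> V - R" unfolding U_def using Ptri by blast
  have cardR: "card R = (\<Sum>T\<in>TT. card (T - {\<sigma> T}))" unfolding R_def Rs_def
    apply (rule card_UN_disjoint)
    using finTT TT_fin TT_disj by blast+
  also have "\<dots> = (\<Sum>T\<in>TT. 2)"
    apply (rule sum.cong) using TT_fin TT_card sigT by auto
  finally have cardR2: "card R = 2 * n" unfolding n_def by simp
  have XR: "X \<inter> R = (\<Union>T\<in>TT. X \<inter> (T - {\<sigma> T}))" unfolding R_def Rs_def by blast
  have cardXR: "card (X \<inter> R) = (\<Sum>T\<in>TT. card (X \<inter> (T - {\<sigma> T})))" unfolding XR
    apply (rule card_UN_disjoint)
    using finTT TT_fin TT_disj by blast+
  have cardU: "card U = (\<Sum>t\<in>P. card t)" unfolding U_def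
    using card_UN_disjoint[of P "\<lambda>t. t"] finP finPt Pdisj by simp
  have XU: "X \<inter> U = (\<Union>t\<in>P. X \<inter> t)" unfolding U_def by blast
  have cardXU: "card (X \<inter> U) = (\<Sum>t\<in>P. card (X \<inter> t))" unfolding XU
    apply (rule card_UN_disjoint)
    using finP finPt Pdisj by blast+
  have WV: "W \<subseteq> V" unfolding W_def by blast
  have octW: "oct_num W E \<le> card (X \<inter> W)"
  proof -
    have "is_oct W E (X \<inter> W)"
    proof -
      obtain A where A: "A \<subseteq> V - X" "\<forall>u\<in>V - X. \<forall>v\<in>V - X. E u v \<longrightarrow> (u \<in> A \<longleftrightarrow> v \<notin> A)"
        using Xoct unfolding is_oct_def bipartite_def by blast
      have "bipartite (W - X \<inter> W) E" unfolding bipartite_def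
        apply (rule exI[of _ "A \<inter> W"]) using A WV by auto
      then show ?thesis unfolding is_oct_def by blast
    qed
    moreover have "finite {card S |S. is_oct W E S}"
    proof -
      have "{card S |S. is_oct W E S} \<subseteq> card ` Pow W" unfolding is_oct_def by blast
      moreover have "finite W" using finV WV finite_subset by blast
      then have "finite (card ` Pow W)" by simp
      ultimately show ?thesis by (rule finite_subset)
    qed
    ultimately show ?thesis unfolding oct_num_def by (intro Min_le) auto
  qed
  have cardX: "card X = card (X \<inter> R) + card (X \<inter> U) + card (X \<inter> W)"
  proof -
    have "X = (X \<inter> R) \<union> (X \<inter> U) \<union> (X \<inter> W)" using XV unfolding W_def by blast
    moreover have "(X \<inter> R) \<inter> (X \<inter> U) = {}" using UV by blast
    moreover have "((X \<inter> R) \<union> (X \<inter> U)) \<inter> (X \<inter> W) = {}" unfolding W_def by blast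
    ultimately show ?thesis using finX card_Un_disjoint[of "X \<inter> R" "X \<inter> U"]
      card_Un_disjoint[of "X \<inter> R \<union> X \<inter> U" "X \<inter> W"] by simp
  qed
  have S2: "card (R \<union> U \<union> Y) \<le> card R + card U + card Y"
    using card_Un_le[of "R \<union> U" Y] card_Un_le[of R U] by linarith
  have Yb: "real (card Y) \<le> \<rho>0 * (real (card X) - card (X \<inter> R) - card (X \<inter> U))"
  proof -
    have "real (card Y) \<le> \<rho>0 * real (oct_num W E)" using Y(2) unfolding W_def R_def U_def .
    also have "\<dots> \<le> \<rho>0 * real (card (X \<inter> W))" using octW rho1 by (simp add: mult_left_mono)
    finally show ?thesis using cardX by simp
  qed
  have sU: "card U = 3 * card P"
  proof -
    have "(\<Sum>t\<in>P. card t) = (\<Sum>t\<in>P. 3)" by (rule sum.cong) (use Ptri in auto)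
    then show ?thesis using cardU by simp
  qed
  have e1: "(\<Sum>T\<in>TT. 2 - \<rho>0 * real (card (X \<inter> (T - {\<sigma> T})))) = 2 * real n - \<rho>0 * real (card (X \<inter> R))"
    by (simp add: sum_subtractf sum_distrib_left[symmetric] cardXR n_def)
  have e2: "(\<Sum>t\<in>P. 3 - \<rho>0 * real (card (X \<inter> t))) = 3 * real (card P) - \<rho>0 * real (card (X \<inter> U))"
    by (simp add: sum_subtractf sum_distrib_left[symmetric] cardXU)
  have Yb2: "\<rho>0 * (real (card X) - card (X \<inter> R) - card (X \<inter> U)) = \<rho>0 * card X - \<rho>0 * card (X \<inter> R) - \<rho>0 * card (X \<inter> U)"
    by (simp add: algebra_simps)
  have main1: "real (card (R \<union> U \<union> Y)) \<le> \<rho>0 * card X + (\<Sum>T\<in>TT. 2 - \<rho>0 * real (card (X \<inter> (T - {\<sigma> T}))))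
     + (\<Sum>t\<in>P. 3 - \<rho>0 * real (card (X \<inter> t)))"
  proof -
    have "real (card (R \<union> U \<union> Y)) \<le> real (card R) + real (card U) + real (card Y)" using S2 by linarith
    then show ?thesis unfolding e1 e2 using cardR2 sU Yb Yb2 by simp
  qed
  define g where "g t = (if t \<subseteq> VT then cc * real (card (t - X)) else 3 - \<rho>0)" for t
  have tb: "3 - \<rho>0 * real (card (X \<inter> t)) \<le> g t" if t: "t \<in> P" for t
  proof -
    have ft: "finite t" using finPt t .
    have x1: "card (X \<inter> t) \<ge> 1"
    proof -
      have "X \<inter> t \<noteq> {}" using tri_meets_X Ptri t by blast
      then show ?thesis using ft by (simp add: Suc_leI card_gt_0_iff)
    qed
    have x3: "card (X \<inter> t) \<le> 3" using Ptri[OF t] ft by (metis Int_lower2 card_mono)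
    have cd: "card (t - X) = 3 - card (X \<inter> t)"
      using Ptri[OF t] ft by (metis Int_commute card_Diff_subset_Int Diff_Int2 Int_lower2 card_Diff_subset inf.absorb_iff2 finite_Int) 
    show ?thesis
    proof (cases "t \<subseteq> VT")
      case True
      have "card (X \<inter> t) = 1 \<or> card (X \<inter> t) = 2 \<or> card (X \<inter> t) = 3" using x1 x3 by linarith
      then show ?thesis using True rho1 rho3 cd unfolding g_def cc_def by auto
    next
      case False
      then show ?thesis using x1 rho1 unfolding g_def
        by (simp add: mult_left_mono[of 1 "real (card (X \<inter> t))" \<rho>0])
    qed
  qed
  have sumg: "(\<Sum>t\<in>P. g t) = cc * (\<Sum>t\<in>P \<inter> {t. t \<subseteq> VT}. real (card (t - X)))
       + (3 - \<rho>0) * real (card (P \<inter> - {t. t \<subseteq> VT}))"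
    unfolding g_def using finP by (simp add: sum.If_cases sum_distrib_left)
  define Ob where "Ob = {T \<in> triangles V E. \<not> T \<subseteq> VT}"
  have bound1: "card (P \<inter> - {t. t \<subseteq> VT}) \<le> tri_num Ob"
  proof -
    have pk: "packing Ob (P \<inter> - {t. t \<subseteq> VT})" unfolding packing_def
    proof (intro conjI ballI impI)
      show "P \<inter> - {t. t \<subseteq> VT} \<subseteq> Ob" unfolding Ob_def using Ptri by auto
    next
      fix T1 T2 assume "T1 \<in> P \<inter> - {t. t \<subseteq> VT}" "T2 \<in> P \<inter> - {t. t \<subseteq> VT}" "T1 \<noteq> T2"
      then show "T1 \<inter> T2 = {}" using Pdisj by auto
    qed
    have "finite Ob"
    proof -
      have "Ob \<subseteq> Pow V"
      proof
        fix t assume "t \<in> Ob"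
        then have "t \<in> triangles V E" unfolding Ob_def by blast
        then show "t \<in> Pow V" using tri_props(1)[OF _ order_refl] by blast
      qed
      moreover have "finite (Pow V)" using finV by simp
      ultimately show ?thesis by (rule finite_subset)
    qed
    then have "finite {card P |P. packing Ob P}"
    proof -
      have "{card P |P. packing Ob P} \<subseteq> card ` Pow Ob"
      proof
        fix x assume "x \<in> {card P |P. packing Ob P}"
        then obtain P0 where P0: "x = card P0" "packing Ob P0" by (auto simp only: mem_Collect_eq)
        then have "P0 \<in> Pow Ob" unfolding packing_def by simp
        then show "x \<in> card ` Pow Ob" using P0(1) by (rule rev_image_eqI)
      qed
      moreover have "finite (card ` Pow Ob)" using \<open>finite Ob\<close> by simp
      ultimately show ?thesis by (rule finite_subset)
    qed
    moreover have "card (P \<inter> - {t. t \<subseteq> VT}) \<in> {card P |P. packing Ob P}"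
      using pk by (intro CollectI exI[of _ "P \<inter> - {t. t \<subseteq> VT}"]) simp
    ultimately show ?thesis unfolding tri_num_def by (rule Max_ge)
  qed
  have bound2: "(\<Sum>t\<in>P \<inter> {t. t \<subseteq> VT}. card (t - X)) \<le> card {T\<in>TT. \<sigma> T \<notin> X \<and> bad T \<sigma>}"
  proof -
    have "(\<Sum>t\<in>P \<inter> {t. t \<subseteq> VT}. card (t - X)) = card (\<Union>t\<in>P \<inter> {t. t \<subseteq> VT}. t - X)"
      by (rule card_UN_disjoint[symmetric]) (use finP finPt Pdisj in auto)
    also have "\<dots> \<le> card (\<sigma> ` {T\<in>TT. \<sigma> T \<notin> X \<and> bad T \<sigma>})"
    proof (rule card_mono)
      show "finite (\<sigma> ` {T\<in>TT. \<sigma> T \<notin> X \<and> bad T \<sigma>})" using finTT by simp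
      have rep: "\<exists>T\<in>TT. y \<in> T \<and> y = \<sigma> T" if yy: "y \<in> VT" "y \<notin> R" for y
      proof -
        obtain T where "T \<in> TT" "y \<in> T" using yy(1) unfolding VT_def by blast
        moreover have "y = \<sigma> T" using yy(2) calculation unfolding R_def Rs_def by blast
        ultimately show ?thesis by blast
      qed
      show "(\<Union>t\<in>P \<inter> {t. t \<subseteq> VT}. t - X) \<subseteq> \<sigma> ` {T\<in>TT. \<sigma> T \<notin> X \<and> bad T \<sigma>}"
      proof
        fix y assume "y \<in> (\<Union>t\<in>P \<inter> {t. t \<subseteq> VT}. t - X)"
        then obtain t where t: "t \<in> P" "t \<subseteq> VT" "y \<in> t" "y \<notin> X" by blast
        have tR: "t \<subseteq> V - R" "t \<in> triangles V E" using Ptri[OF t(1)] by auto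
        obtain T where T: "T \<in> TT" "y \<in> T" "y = \<sigma> T" using rep t tR by blast
        obtain z where z: "z \<in> t" "z \<in> X" using tri_meets_X[OF tR(2)] by blast
        obtain T2 where T2: "T2 \<in> TT" "z \<in> T2" "z = \<sigma> T2" using rep z t tR by blast
        have "z \<noteq> y" using z t by blast
        then have "T2 \<noteq> T" using T T2 by blast
        moreover have "E y z" using tri_props(3)[OF tR(2) order_refl] t z \<open>z \<noteq> y\<close> by blast
        ultimately have "bad T \<sigma>" unfolding bad_def using T T2 z by blast
        then show "y \<in> \<sigma> ` {T\<in>TT. \<sigma> T \<notin> X \<and> bad T \<sigma>}" using T t by blast
      qed
    qed
    also have "\<dots> \<le> card {T\<in>TT. \<sigma> T \<notin> X \<and> bad T \<sigma>}" by (rule card_image_le) (use finTT in simp)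
    finally show ?thesis .
  qed
  have sumQ: "(\<Sum>T\<in>TT. Q T \<sigma>) = (\<Sum>T\<in>TT. 2 - \<rho>0 * real (card (X \<inter> (T - {\<sigma> T}))))
      + cc * real (card {T\<in>TT. \<sigma> T \<notin> X \<and> bad T \<sigma>})"
  proof -
    have "(\<Sum>T\<in>TT. (if \<sigma> T \<notin> X \<and> bad T \<sigma> then 1 else 0)) = real (card {T\<in>TT. \<sigma> T \<notin> X \<and> bad T \<sigma>})"
      using finTT by (simp add: sum.If_cases Collect_conj_eq Int_commute)
    then show ?thesis unfolding Q_def by (simp add: sum.distrib sum_distrib_left[symmetric])
  qed
  have ccpos: "cc \<ge> 0" unfolding cc_def using rho3 by simp
  have "(\<Sum>t\<in>P. 3 - \<rho>0 * real (card (X \<inter> t))) \<le> (\<Sum>t\<in>P. g t)" by (rule sum_mono) (rule tb)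
  also have "\<dots> \<le> cc * real (card {T\<in>TT. \<sigma> T \<notin> X \<and> bad T \<sigma>}) + (3 - \<rho>0) * real (tri_num Ob)"
  proof -
    have "(\<Sum>t\<in>P \<inter> {t. t \<subseteq> VT}. real (card (t - X))) \<le> real (card {T\<in>TT. \<sigma> T \<notin> X \<and> bad T \<sigma>})"
      unfolding of_nat_sum[symmetric] using bound2 by (simp only: of_nat_le_iff)
    then have a: "cc * (\<Sum>t\<in>P \<inter> {t. t \<subseteq> VT}. real (card (t - X))) \<le> cc * real (card {T\<in>TT. \<sigma> T \<notin> X \<and> bad T \<sigma>})"
      using ccpos by (rule mult_left_mono)
    have b: "(3 - \<rho>0) * real (card (P \<inter> - {t. t \<subseteq> VT})) \<le> (3 - \<rho>0) * real (tri_num Ob)"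
      using bound1 rho3 by (simp add: mult_left_mono)
    show ?thesis unfolding sumg using a b by linarith
  qed
  finally have lastb: "(\<Sum>t\<in>P. 3 - \<rho>0 * real (card (X \<inter> t))) \<le> cc * real (card {T\<in>TT. \<sigma> T \<notin> X \<and> bad T \<sigma>}) + (3 - \<rho>0) * real (tri_num Ob)" .
  have eqS: "Rs \<sigma> \<union> \<Union>P \<union> Y = R \<union> U \<union> Y" unfolding R_def U_def ..
  have eqO: "{T \<in> triangles V E. \<not> T \<subseteq> VT} = Ob" unfolding Ob_def ..
  show ?thesis unfolding eqS eqO using main1 sumQ lastb by linarith
qed

definition "Yv v = {x \<in> X. E v x}"
definition "uu T v = (\<Prod>T2\<in>TT - {T}. real (card (T2 - Yv v)) / 3)"
definition "phi T = (if card (X \<inter> T) = 1 then (1/6) * (\<Sum>v\<in>T - X. uu T v) else 1/2)"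

lemma sigT: "\<sigma> \<in> \<Omega> \<Longrightarrow> T \<in> TT \<Longrightarrow> \<sigma> T \<in> T"
  by (auto simp: \<Omega>_def PiE_def Pi_def)

lemma card_Omega: "card \<Omega> = 3 ^ card TT"
proof -
  have "card \<Omega> = (\<Prod>T\<in>TT. card T)" unfolding \<Omega>_def using finTT by (rule card_PiE)
  also have "\<dots> = (\<Prod>T\<in>TT. 3)" by (rule prod.cong) (auto simp: TT_card)
  finally show ?thesis by simp
qed

lemma finOmega: "finite \<Omega>"
  unfolding \<Omega>_def using finTT TT_fin by (intro finite_PiE) auto

lemma T_sum_B:
  assumes T: "T \<in> TT" and j: "card (X \<inter> T) \<noteq> 1"
  shows "(\<Sum>\<sigma>\<in>\<Omega>. Q T \<sigma>) \<le> real (card \<Omega>) * (3 - \<rho>0) * (1 - phi T)"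
proof -
  have fT: "finite T" using TT_fin T .
  have j2: "card (X \<inter> T) \<ge> 2"
  proof -
    have "X \<inter> T \<noteq> {}" using tri_meets_X TT_tri T by blast
    then have "card (X \<inter> T) \<ge> 1" using fT by (simp add: Suc_leI card_gt_0_iff)
    then show ?thesis using j by linarith
  qed
  have "Q T \<sigma> \<le> cc" if s: "\<sigma> \<in> \<Omega>" for \<sigma>
  proof (cases "\<sigma> T \<in> X")
    case True
    have "X \<inter> (T - {\<sigma> T}) = (X \<inter> T) - {\<sigma> T}" by blast
    then have "card (X \<inter> (T - {\<sigma> T})) = card (X \<inter> T) - 1"
      using True sigT[OF s T] fT by (simp add: card_Diff_singleton)
    then have h: "real (card (X \<inter> (T - {\<sigma> T}))) \<ge> 1" using j2 by simp
    have "\<rho>0 * real (card (X \<inter> (T - {\<sigma> T}))) \<ge> \<rho>0" using mult_left_mono[OF h, of \<rho>0] rho1 by simp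
    moreover have "Q T \<sigma> = 2 - \<rho>0 * real (card (X \<inter> (T - {\<sigma> T})))" unfolding Q_def using True by simp
    ultimately have a: "Q T \<sigma> \<le> 2 - \<rho>0" by linarith
    have b: "2 - \<rho>0 \<le> cc" unfolding cc_def using rho1 by simp
    show ?thesis using a b by (rule order_trans)
  next
    case False
    have "X \<inter> (T - {\<sigma> T}) = X \<inter> T" using False by blast
    then have h: "real (card (X \<inter> (T - {\<sigma> T}))) \<ge> 2" using j2 by simp
    have "\<rho>0 * real (card (X \<inter> (T - {\<sigma> T}))) \<ge> 2 * \<rho>0" using mult_left_mono[OF h, of \<rho>0] rho1 by simp
    moreover have "Q T \<sigma> \<le> 2 - \<rho>0 * real (card (X \<inter> (T - {\<sigma> T}))) + cc" unfolding Q_def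
      using rho3 by (simp add: cc_def)
    ultimately have a: "Q T \<sigma> \<le> 2 - 2 * \<rho>0 + cc" by linarith
    have b: "2 - 2 * \<rho>0 + cc \<le> cc" using rho1 by simp
    show ?thesis using a b by (rule order_trans)
  qed
  then have "(\<Sum>\<sigma>\<in>\<Omega>. Q T \<sigma>) \<le> (\<Sum>\<sigma>\<in>\<Omega>. cc)" by (intro sum_mono) auto
  also have "\<dots> = real (card \<Omega>) * (3 - \<rho>0) * (1 - phi T)" using j unfolding phi_def cc_def by simp
  finally show ?thesis .
qed

lemma T_sum_A:
  assumes T: "T \<in> TT" and j: "card (X \<inter> T) = 1"
  shows "(\<Sum>\<sigma>\<in>\<Omega>. Q T \<sigma>) \<le> real (card \<Omega>) * (3 - \<rho>0) * (1 - phi T)"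
proof -
  obtain w where w: "X \<inter> T = {w}" using j card_1_singleton_iff[of "X \<inter> T"] by auto
  have wT: "w \<in> T" "w \<in> X" using w by auto
  have TX: "T - X = T - {w}" using w by blast
  have fT: "finite T" using TT_fin T .
  define m where "m = card (TT - {T})"
  have nm: "card TT = Suc m" unfolding m_def using card_Suc_Diff1[OF finTT T] by simp
  define Om1 where "Om1 = {\<sigma>\<in>\<Omega>. \<sigma> T \<noteq> w}"
  define Om2 where "Om2 = {\<sigma>\<in>\<Omega>. \<sigma> T \<noteq> w \<and> \<not> bad T \<sigma>}"
  define K where "K v = (\<Prod>T2\<in>TT - {T}. card (T2 - Yv v))" for v
  have Qeq: "Q T \<sigma> = 2 - \<rho>0 * of_bool (\<sigma> \<in> Om1) + cc * (of_bool (\<sigma> \<in> Om1) - of_bool (\<sigma> \<in> Om2))"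
    if s: "\<sigma> \<in> \<Omega>" for \<sigma>
  proof (cases "\<sigma> T = w")
    case True
    have "X \<inter> (T - {\<sigma> T}) = {}" using w True by blast
    then show ?thesis unfolding Q_def Om1_def Om2_def using True wT by simp
  next
    case False
    have sT: "\<sigma> T \<in> T" using sigT[OF s T] .
    have "X \<inter> (T - {\<sigma> T}) = {w}" using w False by blast
    moreover have "\<sigma> T \<notin> X" using w False sT by blast
    ultimately show ?thesis unfolding Q_def Om1_def Om2_def using False s by simp
  qed
  have O1: "Om1 \<subseteq> \<Omega>" "Om2 \<subseteq> \<Omega>" "Om2 \<subseteq> Om1" unfolding Om1_def Om2_def by auto
  have sumQ: "(\<Sum>\<sigma>\<in>\<Omega>. Q T \<sigma>) = 2 * real (card \<Omega>) - \<rho>0 * real (card Om1) + cc * (real (card Om1) - real (card Om2))"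
  proof -
    have "(\<Sum>\<sigma>\<in>\<Omega>. Q T \<sigma>) = (\<Sum>\<sigma>\<in>\<Omega>. 2 - \<rho>0 * of_bool (\<sigma> \<in> Om1) + cc * (of_bool (\<sigma> \<in> Om1) - of_bool (\<sigma> \<in> Om2)))"
      by (rule sum.cong) (auto simp: Qeq)
    also have "\<dots> = 2 * real (card \<Omega>) - \<rho>0 * (\<Sum>\<sigma>\<in>\<Omega>. of_bool (\<sigma> \<in> Om1)) + cc * ((\<Sum>\<sigma>\<in>\<Omega>. of_bool (\<sigma> \<in> Om1)) - (\<Sum>\<sigma>\<in>\<Omega>. of_bool (\<sigma> \<in> Om2)))"
      by (simp add: sum.distrib sum_subtractf sum_distrib_left[symmetric])
    also have "(\<Sum>\<sigma>\<in>\<Omega>. of_bool (\<sigma> \<in> Om1)) = real (card Om1)"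
      using finOmega O1 by (simp add: Int_absorb1)
    also have "(\<Sum>\<sigma>\<in>\<Omega>. of_bool (\<sigma> \<in> Om2)) = real (card Om2)"
      using finOmega O1 by (simp add: Int_absorb1)
    finally show ?thesis .
  qed
  have prodT: "(\<Prod>T'\<in>TT. f T') = f T * (\<Prod>T'\<in>TT - {T}. f T')" for f :: "'a set \<Rightarrow> nat"
    using prod.remove[OF finTT T] .
  have c1: "card Om1 \<ge> 2 * 3 ^ m"
  proof -
    define S where "S T' = (if T' = T then T - {w} else T')" for T'
    have "PiE TT S \<subseteq> Om1"
    proof
      fix \<sigma> assume s: "\<sigma> \<in> PiE TT S"
      have "\<sigma> \<in> \<Omega>" using s unfolding \<Omega>_def S_def by (auto simp: PiE_def Pi_def split: if_splits)
      moreover have "\<sigma> T \<noteq> w" using s T unfolding S_def by (auto simp: PiE_def Pi_def)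
      ultimately show "\<sigma> \<in> Om1" unfolding Om1_def by blast
    qed
    moreover have "finite Om1" using O1 finOmega finite_subset by blast
    ultimately have "card (PiE TT S) \<le> card Om1" by (simp add: card_mono)
    moreover have "card (PiE TT S) = 2 * 3 ^ m"
    proof -
      have "card (PiE TT S) = (\<Prod>T'\<in>TT. card (S T'))" using finTT by (rule card_PiE)
      also have "\<dots> = card (S T) * (\<Prod>T'\<in>TT - {T}. card (S T'))" by (rule prodT)
      also have "(\<Prod>T'\<in>TT - {T}. card (S T')) = (\<Prod>T'\<in>TT - {T}. 3)"
        by (rule prod.cong) (auto simp: S_def TT_card)
      also have "card (S T) = 2" unfolding S_def using wT fT TT_card[OF T] by simp
      finally show ?thesis unfolding m_def by simp
    qed
    ultimately show ?thesis by simp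
  qed
  have c2: "card Om2 \<ge> (\<Sum>v\<in>T - {w}. K v)"
  proof -
    define S where "S v T' = (if T' = T then {v} else T' - Yv v)" for v T'
    have sub: "(\<Union>v\<in>T - {w}. PiE TT (S v)) \<subseteq> Om2"
    proof
      fix \<sigma> assume "\<sigma> \<in> (\<Union>v\<in>T - {w}. PiE TT (S v))"
      then obtain v where v: "v \<in> T - {w}" and s: "\<sigma> \<in> PiE TT (S v)" by blast
      have sv: "\<sigma> T = v" using s T unfolding S_def by (auto simp: PiE_def Pi_def)
      have "\<sigma> \<in> \<Omega>" using s v unfolding \<Omega>_def S_def by (auto simp: PiE_def Pi_def split: if_splits)
      moreover have "\<not> bad T \<sigma>"
      proof
        assume "bad T \<sigma>"
        then obtain T2 where T2: "T2 \<in> TT" "T2 \<noteq> T" "\<sigma> T2 \<in> X" "E (\<sigma> T) (\<sigma> T2)" unfolding bad_def by blast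
        have "\<sigma> T2 \<in> S v T2" using s T2(1) by (rule PiE_mem)
        then have "\<sigma> T2 \<in> T2 - Yv v" using T2(2) unfolding S_def by simp
        then show False using T2 sv unfolding Yv_def by blast
      qed
      ultimately show "\<sigma> \<in> Om2" unfolding Om2_def using sv v by blast
    qed
    have finS: "finite (PiE TT (S v))" for v
      using finTT by (rule finite_PiE) (use TT_fin in \<open>auto simp: S_def\<close>)
    have "card (\<Union>v\<in>T - {w}. PiE TT (S v)) = (\<Sum>v\<in>T - {w}. card (PiE TT (S v)))"
    proof (rule card_UN_disjoint)
      show "finite (T - {w})" using fT by simp
      show "\<forall>i\<in>T - {w}. finite (PiE TT (S i))" using finS by blast
      show "\<forall>i\<in>T - {w}. \<forall>j\<in>T - {w}. i \<noteq> j \<longrightarrow> PiE TT (S i) \<inter> PiE TT (S j) = {}"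
        using T unfolding S_def by (auto simp: PiE_def Pi_def)
    qed
    also have "\<dots> = (\<Sum>v\<in>T - {w}. K v)"
    proof (rule sum.cong)
      fix v assume "v \<in> T - {w}"
      have "card (PiE TT (S v)) = (\<Prod>T'\<in>TT. card (S v T'))" using finTT by (rule card_PiE)
      also have "\<dots> = card (S v T) * (\<Prod>T'\<in>TT - {T}. card (S v T'))" by (rule prodT)
      also have "(\<Prod>T'\<in>TT - {T}. card (S v T')) = K v" unfolding K_def
        by (rule prod.cong) (auto simp: S_def)
      finally have "card (PiE TT (S v)) = card (S v T) * K v" .
      moreover have "card (S v T) = 1" by (simp add: S_def)
      ultimately show "card (PiE TT (S v)) = K v" by simp
    qed simp
    finally have "card (\<Union>v\<in>T - {w}. PiE TT (S v)) = (\<Sum>v\<in>T - {w}. K v)" .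
    moreover have "finite Om2" using O1 finOmega finite_subset by blast
    ultimately show ?thesis using sub by (metis card_mono)
  qed
  have cO: "card \<Omega> = 3 * 3 ^ m" using card_Omega nm by simp
  have phiT: "phi T = (1/6) * (\<Sum>v\<in>T - {w}. real (K v)) / 3 ^ m"
  proof -
    have "uu T v = real (K v) / 3 ^ m" for v
    proof -
      have "uu T v = (\<Prod>T2\<in>TT - {T}. real (card (T2 - Yv v))) / (\<Prod>T2\<in>TT - {T}. 3)"
        unfolding uu_def by (rule prod_dividef)
      then show ?thesis unfolding K_def m_def by simp
    qed
    then show ?thesis unfolding phi_def using j TX by (simp add: sum_divide_distrib mult.commute)
  qed
  define M where "M = (3::real) ^ m"
  define Ks where "Ks = (\<Sum>v\<in>T - {w}. real (K v))"
  have Mpos: "M > 0" unfolding M_def by simp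
  have ccpos: "cc \<ge> 0" "\<rho>0 - cc \<ge> 0" unfolding cc_def using rho1 rho3 by auto
  have c1r: "2 * M \<le> real (card Om1)"
  proof -
    have "real (2 * 3 ^ m) \<le> real (card Om1)" using c1 by (simp only: of_nat_le_iff)
    then show ?thesis unfolding M_def by simp
  qed
  have A: "(\<rho>0 - cc) * real (card Om1) \<ge> (\<rho>0 - cc) * (2 * M)"
    using c1r ccpos(2) by (intro mult_left_mono)
  have c2r: "Ks \<le> real (card Om2)"
  proof -
    have "real (\<Sum>v\<in>T - {w}. K v) \<le> real (card Om2)" using c2 by (simp only: of_nat_le_iff)
    then show ?thesis unfolding Ks_def by simp
  qed
  have B: "cc * real (card Om2) \<ge> cc * Ks"
    using c2r ccpos(1) by (intro mult_left_mono)
  have e1: "(\<rho>0 - cc) * real (card Om1) = \<rho>0 * real (card Om1) - cc * real (card Om1)" by (simp add: algebra_simps)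
  have e2: "cc * (real (card Om1) - real (card Om2)) = cc * real (card Om1) - cc * real (card Om2)" by (simp add: algebra_simps)
  have e3: "(\<rho>0 - cc) * (2 * M) = 2 * \<rho>0 * M - 2 * cc * M" by (simp add: algebra_simps)
  have e4: "real (card \<Omega>) * (3 - \<rho>0) * (1 - phi T) = 3 * M * (3 - \<rho>0) - cc * Ks"
    unfolding cO phiT Ks_def[symmetric] cc_def M_def by (simp add: field_simps)
  have e5: "6 * M - 2 * \<rho>0 * M + 2 * cc * M = 3 * M * (3 - \<rho>0)" unfolding cc_def by (simp add: field_simps)
  have e6: "2 * real (card \<Omega>) = 6 * M" unfolding cO M_def by simp
  show ?thesis unfolding sumQ e4 using A B e1 e2 e3 e5 e6 by linarith
qed

lemma exp_half_ln3: "exp (- (ln 3 / 2)) \<le> 2 / (3::real)"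
proof -
  have a0: "exp (- (ln 3 / 2)) * exp (- (ln 3 / 2)) = exp (- ln (3::real))"
    by (subst exp_add[symmetric]) simp
  have a: "exp (- (ln 3 / 2)) * exp (- (ln 3 / 2)) = 1 / (3::real)"
    unfolding a0 by (simp add: exp_minus)
  have "exp (- (ln 3 / 2)) > (0::real)" by simp
  show ?thesis
  proof (rule ccontr)
    assume "\<not> ?thesis"
    then have "exp (- (ln 3 / 2)) > (2/3::real)" by simp
    then have "exp (- (ln 3 / 2)) * exp (- (ln 3 / 2)) > (2/3) * (2/3::real)"
      by (intro mult_strict_mono) auto
    then show False using a by simp
  qed
qed

lemma factor_bound:
  assumes "k \<le> (2::nat)"
  shows "exp (- (ln 3 / 2) * real k) \<le> (3 - real k) / 3"
proof -
  have "k = 0 \<or> k = 1 \<or> k = 2" using assms by auto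
  moreover have "exp (- (ln 3 / 2) * 2) = 1 / (3::real)" by (simp add: exp_minus)
  ultimately show ?thesis using exp_half_ln3 by auto
qed

lemma uu_bound:
  assumes T: "T \<in> TT" and v: "v \<in> T"
  shows "uu T v \<ge> exp (- (ln 3 / 2) * real (card {x \<in> X \<inter> VT - T. E v x}))"
proof -
  have vV: "v \<in> V" using v TT_sub T by blast
  have fac: "exp (- (ln 3 / 2) * real (card (T2 \<inter> Yv v))) \<le> real (card (T2 - Yv v)) / 3"
    if T2: "T2 \<in> TT - {T}" for T2
  proof -
    have T2': "T2 \<in> TT" "T2 \<noteq> T" using T2 by auto
    have "v \<notin> T2" using TT_disj[OF T T2'(1)] T2'(2) v by blast
    then have k2: "card (T2 \<inter> {x. E v x}) \<le> 2" using K4_bound T2'(1) vV by blast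
    have fT2: "finite T2" using TT_fin T2'(1) .
    have "card (T2 \<inter> Yv v) \<le> card (T2 \<inter> {x. E v x})"
      using fT2 by (intro card_mono) (auto simp: Yv_def)
    then have k: "card (T2 \<inter> Yv v) \<le> 2" using k2 by linarith
    have "card (T2 - Yv v) = 3 - card (T2 \<inter> Yv v)"
      using fT2 TT_card[OF T2'(1)] by (metis Diff_Int2 Int_lower1 card_Diff_subset_Int inf.idem finite_Int card_Diff_subset)
    then have "real (card (T2 - Yv v)) = 3 - real (card (T2 \<inter> Yv v))" using k by simp
    then show ?thesis using factor_bound[OF k] by simp
  qed
  have "exp (- (ln 3 / 2) * real (card {x \<in> X \<inter> VT - T. E v x}))
        = (\<Prod>T2\<in>TT - {T}. exp (- (ln 3 / 2) * real (card (T2 \<inter> Yv v))))"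
  proof -
    have U: "{x \<in> X \<inter> VT - T. E v x} = (\<Union>T2\<in>TT - {T}. T2 \<inter> Yv v)"
    proof
      show "{x \<in> X \<inter> VT - T. E v x} \<subseteq> (\<Union>T2\<in>TT - {T}. T2 \<inter> Yv v)"
        unfolding VT_def Yv_def by blast
      show "(\<Union>T2\<in>TT - {T}. T2 \<inter> Yv v) \<subseteq> {x \<in> X \<inter> VT - T. E v x}"
      proof
        fix x assume "x \<in> (\<Union>T2\<in>TT - {T}. T2 \<inter> Yv v)"
        then obtain T2 where "T2 \<in> TT" "T2 \<noteq> T" "x \<in> T2" "x \<in> X" "E v x" unfolding Yv_def by blast
        moreover have "x \<notin> T" using TT_disj[OF T calculation(1)] calculation by blast
        ultimately show "x \<in> {x \<in> X \<inter> VT - T. E v x}" unfolding VT_def by blast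
      qed
    qed
    have "card {x \<in> X \<inter> VT - T. E v x} = (\<Sum>T2\<in>TT - {T}. card (T2 \<inter> Yv v))"
      unfolding U by (rule card_UN_disjoint) (use finTT TT_fin TT_disj in auto)
    then have "real (card {x \<in> X \<inter> VT - T. E v x}) = (\<Sum>T2\<in>TT - {T}. real (card (T2 \<inter> Yv v)))" by simp
    then show ?thesis by (simp add: sum_distrib_left exp_sum finTT)
  qed
  also have "\<dots> \<le> uu T v" unfolding uu_def
    by (rule prod_mono) (use fac in auto)
  finally show ?thesis .
qed

definition "same u v \<longleftrightarrow> (\<exists>T\<in>TT. u \<in> T \<and> v \<in> T)"
definition "ext v = {u \<in> VT. E v u \<and> \<not> same v u}"

lemma same_in: "T \<in> TT \<Longrightarrow> v \<in> T \<Longrightarrow> same v u \<longleftrightarrow> u \<in> T"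
  unfolding same_def using TT_disj by blast

lemma same_sym: "same u v \<longleftrightarrow> same v u" unfolding same_def by blast

lemma finVT: "finite VT" using finV VTV finite_subset by blast

lemma deg_ext:
  assumes T: "T \<in> TT" and v: "v \<in> T"
  shows "card {u \<in> VT. E v u} = card (ext v) + 2"
proof -
  have vV: "v \<in> V" using v TT_sub T by blast
  have eq: "{u \<in> VT. E v u} = ext v \<union> (T - {v})"
  proof
    show "{u \<in> VT. E v u} \<subseteq> ext v \<union> (T - {v})"
      unfolding ext_def using same_in[OF T v] irrE vV by blast
    show "ext v \<union> (T - {v}) \<subseteq> {u \<in> VT. E v u}"
    proof
      fix u assume "u \<in> ext v \<union> (T - {v})"
      then show "u \<in> {u \<in> VT. E v u}"
      proof
        assume "u \<in> ext v" then show ?thesis unfolding ext_def by blast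
      next
        assume "u \<in> T - {v}"
        then have "u \<in> VT" "E v u" using T v TT_E[OF T v] unfolding VT_def by auto
        then show ?thesis by blast
      qed
    qed
  qed
  have disj: "ext v \<inter> (T - {v}) = {}" unfolding ext_def using same_in[OF T v] by blast
  have fe: "finite (ext v)" unfolding ext_def using finVT by simp
  have "card (T - {v}) = 2" using TT_card[OF T] TT_fin[OF T] v by simp
  then show ?thesis unfolding eq using card_Un_disjoint[OF fe _ disj] TT_fin[OF T] by simp
qed

lemma r_eq:
  assumes T: "T \<in> TT" and v: "v \<in> T"
  shows "{x \<in> X \<inter> VT - T. E v x} = {x \<in> X \<inter> VT. E v x \<and> \<not> same v x}"
  using same_in[OF T v] by blast

lemma card_VT: "card VT = 3 * card TT"
proof -
  have "card VT = (\<Sum>T\<in>TT. card T)" unfolding VT_def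
    using card_UN_disjoint[of TT "\<lambda>T. T"] finTT TT_fin TT_disj by simp
  also have "\<dots> = (\<Sum>T\<in>TT. 3)" by (rule sum.cong) (auto simp: TT_card)
  finally show ?thesis by simp
qed

lemma sum_deg: "(\<Sum>v\<in>VT. real (card {u \<in> VT. E v u})) = (\<Sum>v\<in>VT. real (card (ext v))) + 6 * real (card TT)"
proof -
  have "(\<Sum>v\<in>VT. real (card {u \<in> VT. E v u})) = (\<Sum>v\<in>VT. real (card (ext v)) + 2)"
  proof (rule sum.cong)
    fix v assume "v \<in> VT"
    then obtain T where "T \<in> TT" "v \<in> T" unfolding VT_def by blast
    then show "real (card {u \<in> VT. E v u}) = real (card (ext v)) + 2" using deg_ext by simp
  qed simp
  also have "\<dots> = (\<Sum>v\<in>VT. real (card (ext v))) + 2 * real (card VT)" by (simp add: sum.distrib)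
  finally show ?thesis using card_VT by simp
qed

lemma M_bound:
  assumes N: "N \<subseteq> VT - X"
  shows "2 * (\<Sum>v\<in>N. real (card {x \<in> X \<inter> VT. E v x \<and> \<not> same v x})) \<le> (\<Sum>v\<in>VT. real (card (ext v)))"
proof -
  define XT where "XT = X \<inter> VT"
  have fN: "finite N" using N finVT finite_subset by blast
  have fXT: "finite XT" unfolding XT_def using finX by simp
  define S where "S = (\<Sum>v\<in>N. real (card {x \<in> XT. E v x \<and> \<not> same v x}))"
  have S1: "S \<le> (\<Sum>v\<in>N. real (card (ext v)))" unfolding S_def
  proof (rule sum_mono)
    fix v assume "v \<in> N"
    have "{x \<in> XT. E v x \<and> \<not> same v x} \<subseteq> ext v" unfolding XT_def ext_def by blast
    moreover have "finite (ext v)" unfolding ext_def using finVT by simp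
    ultimately show "real (card {x \<in> XT. E v x \<and> \<not> same v x}) \<le> real (card (ext v))"
      by (simp add: card_mono)
  qed
  have S2: "S \<le> (\<Sum>x\<in>XT. real (card (ext x)))"
  proof -
    have "S = (\<Sum>v\<in>N. \<Sum>x\<in>XT. of_bool (E v x \<and> \<not> same v x))"
      unfolding S_def
    proof (rule sum.cong)
      fix v assume "v \<in> N"
      have "{x \<in> XT. E v x \<and> \<not> same v x} = XT \<inter> {x. E v x \<and> \<not> same v x}" by blast
      then show "real (card {x \<in> XT. E v x \<and> \<not> same v x}) = (\<Sum>x\<in>XT. of_bool (E v x \<and> \<not> same v x))"
        using fXT by simp
    qed simp
    also have "\<dots> = (\<Sum>x\<in>XT. \<Sum>v\<in>N. of_bool (E v x \<and> \<not> same v x))" by (rule sum.swap)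
    also have "\<dots> \<le> (\<Sum>x\<in>XT. real (card (ext x)))"
    proof (rule sum_mono)
      fix x assume x: "x \<in> XT"
      have "(\<Sum>v\<in>N. of_bool (E v x \<and> \<not> same v x)) = real (card (N \<inter> {v. E v x \<and> \<not> same v x}))"
        using fN by simp
      also have "\<dots> \<le> real (card (ext x))"
      proof -
        have "N \<inter> {v. E v x \<and> \<not> same v x} \<subseteq> ext x"
        proof
          fix v assume v: "v \<in> N \<inter> {v. E v x \<and> \<not> same v x}"
          have "v \<in> V" "x \<in> V" using v N x VTV unfolding XT_def by auto
          then have "E x v" using v symE by blast
          then show "v \<in> ext x" using v N same_sym unfolding ext_def by blast
        qed
        moreover have "finite (ext x)" unfolding ext_def using finVT by simp
        ultimately show ?thesis by (simp add: card_mono)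
      qed
      finally show "(\<Sum>v\<in>N. of_bool (E v x \<and> \<not> same v x)) \<le> real (card (ext x))" .
    qed
    finally show ?thesis .
  qed
  have "(\<Sum>v\<in>N. real (card (ext v))) + (\<Sum>x\<in>XT. real (card (ext x))) = (\<Sum>v\<in>N \<union> XT. real (card (ext v)))"
    using N fN fXT unfolding XT_def by (intro sum.union_disjoint[symmetric]) auto
  also have "\<dots> \<le> (\<Sum>v\<in>VT. real (card (ext v)))"
  proof (rule sum_mono2[OF finVT])
    show "N \<union> XT \<subseteq> VT" using N unfolding XT_def by blast
  qed simp
  finally have "S + S \<le> (\<Sum>v\<in>VT. real (card (ext v)))" using S1 S2 by linarith
  then show ?thesis unfolding S_def XT_def by simp
qed

lemma tangent: "exp (- (c * r)) \<ge> exp (- (c * m)) * (1 - c * (r - m))" for c r m :: real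
proof -
  have "exp (- (c * r)) = exp (- (c * m)) * exp (- (c * (r - m)))"
    by (simp add: exp_add[symmetric] algebra_simps)
  moreover have "1 - c * (r - m) \<le> exp (- (c * (r - m)))" using exp_ge_add_one_self[of "- (c * (r - m))"] by simp
  ultimately show ?thesis by (simp add: mult_left_mono)
qed

lemma phi_sum:
  "(\<Sum>T\<in>TT. phi T) \<ge> (1/3) powr (3/8 * avg_degree VT E + 1/4) * real (card TT)"
proof (cases "TT = {}")
  case True
  then show ?thesis by simp
next
  case False
  define n where "n = real (card TT)"
  have npos: "n > 0" unfolding n_def using False finTT by (simp add: card_gt_0_iff)
  define L where "L = ln (3::real)"
  have Lpos: "L > 0" unfolding L_def by simp
  define D where "D = (\<Sum>v\<in>VT. real (card (ext v)))"
  have Dnn: "D \<ge> 0" unfolding D_def by (simp add: sum_nonneg)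
  define \<mu> where "\<mu> = D / (4 * n)"
  define y where "y = L / 2 * \<mu>"
  have ynn: "y \<ge> 0" unfolding y_def \<mu>_def using Lpos Dnn npos by simp
  define P where "P = exp (- y)"
  have Ppos: "P > 0" unfolding P_def by simp
  have Py: "P * (1 + y) \<le> 1"
  proof -
    have "1 + y \<le> exp y" by (rule exp_ge_add_one_self)
    then have "P * (1 + y) \<le> P * exp y" using Ppos by (simp add: mult_left_mono)
    also have "P * exp y = 1" unfolding P_def by (simp add: exp_minus)
    finally show ?thesis .
  qed
  have dval: "avg_degree VT E = (D + 6 * n) / (3 * n)"
    unfolding avg_degree_def D_def n_def using sum_deg card_VT by simp
  have pval: "(1/3) powr (3/8 * avg_degree VT E + 1/4) = P / 3"
  proof -
    have "(1/3::real) powr (3/8 * avg_degree VT E + 1/4) = exp ((3/8 * avg_degree VT E + 1/4) * ln (1/3))"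
      by (simp add: powr_def)
    also have "(3/8 * avg_degree VT E + 1/4) * ln (1/3::real) = - y + - L"
    proof -
      have l: "ln (1/3::real) = - L" unfolding L_def by (simp add: ln_div)
      have h: "3/8 * avg_degree VT E + 1/4 = D / (8 * n) + 1" unfolding dval using npos by (simp add: field_simps)
      have yv: "y = L * (D / (8 * n))" unfolding y_def \<mu>_def by simp
      show ?thesis unfolding h l yv by (simp add: algebra_simps)
    qed
    also have "exp (- y + - L) = P / 3"
    proof -
      have "exp (- y + - L) = exp (- y) * exp (- L)" by (rule exp_add)
      moreover have "exp (- L) = 1 / 3" unfolding L_def by (simp add: exp_minus)
      ultimately show ?thesis unfolding P_def by simp
    qed
    finally show ?thesis .
  qed
  define A where "A = {T \<in> TT. card (X \<inter> T) = 1}"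
  define B where "B = TT - A"
  have AB: "A \<subseteq> TT" "B \<subseteq> TT" "A \<inter> B = {}" "A \<union> B = TT" unfolding A_def B_def by auto
  have fA: "finite A" "finite B" using AB finTT finite_subset by auto
  define r where "r v = real (card {x \<in> X \<inter> VT. E v x \<and> \<not> same v x})" for v
  have phiA: "phi T \<ge> (P/3) * (1 + y) - (P * L / 12) * (\<Sum>v\<in>T - X. r v)" if TA: "T \<in> A" for T
  proof -
    have T: "T \<in> TT" and j: "card (X \<inter> T) = 1" using TA unfolding A_def by auto
    obtain w where w: "X \<inter> T = {w}" using j card_1_singleton_iff[of "X \<inter> T"] by auto
    have c2: "card (T - X) = 2"
    proof -
      have "T - X = T - {w}" using w by blast
      moreover have "w \<in> T" using w by blast
      ultimately show ?thesis using TT_card[OF T] TT_fin[OF T] by (simp add: card_Diff_singleton)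
    qed
    have each: "uu T v \<ge> P * (1 + y) - P * (L / 2) * r v" if v: "v \<in> T - X" for v
    proof -
      have vT: "v \<in> T" using v by blast
      have "uu T v \<ge> exp (- (ln 3 / 2) * r v)"
        using uu_bound[OF T vT] unfolding r_def r_eq[OF T vT] .
      then have u1: "uu T v \<ge> exp (- (L / 2 * r v))" unfolding L_def by simp
      have u2: "exp (- (L / 2 * r v)) \<ge> exp (- (L / 2 * \<mu>)) * (1 - L / 2 * (r v - \<mu>))"
        by (rule tangent)
      have u3: "exp (- (L / 2 * \<mu>)) * (1 - L / 2 * (r v - \<mu>)) = P * (1 + y) - P * (L / 2) * r v"
        unfolding P_def y_def by (simp add: field_simps)
      show ?thesis using u1 u2 u3 by linarith
    qed
    have s1: "(\<Sum>v\<in>T - X. P * (1 + y) - P * (L / 2) * r v) \<le> (\<Sum>v\<in>T - X. uu T v)"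
      by (rule sum_mono) (rule each)
    have s2: "(\<Sum>v\<in>T - X. P * (1 + y) - P * (L / 2) * r v) = 2 * (P * (1 + y)) - P * (L / 2) * (\<Sum>v\<in>T - X. r v)"
      using c2 by (simp add: sum_subtractf sum_distrib_left)
    have s3: "phi T = 1/6 * (\<Sum>v\<in>T - X. uu T v)" unfolding phi_def using j by simp
    have s4: "1/6 * (2 * (P * (1 + y)) - P * (L / 2) * (\<Sum>v\<in>T - X. r v)) = (P/3) * (1 + y) - (P * L / 12) * (\<Sum>v\<in>T - X. r v)"
      by (simp add: algebra_simps)
    have "1/6 * (2 * (P * (1 + y)) - P * (L / 2) * (\<Sum>v\<in>T - X. r v)) \<le> 1/6 * (\<Sum>v\<in>T - X. uu T v)"
      using s1 unfolding s2 by (intro mult_left_mono) auto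
    then show ?thesis unfolding s3 s4 .
  qed
  define N where "N = (\<Union>T\<in>A. T - X)"
  have NVT: "N \<subseteq> VT - X" unfolding N_def VT_def using AB by blast
  have sumR: "(\<Sum>T\<in>A. \<Sum>v\<in>T - X. r v) = (\<Sum>v\<in>N. r v)"
    unfolding N_def
  proof (rule sum.UNION_disjoint[symmetric])
    show "finite A" using fA by blast
    show "\<forall>T\<in>A. finite (T - X)" using AB TT_fin by blast
    show "\<forall>i\<in>A. \<forall>j\<in>A. i \<noteq> j \<longrightarrow> (i - X) \<inter> (j - X) = {}"
    proof (intro ballI impI)
      fix i j assume "i \<in> A" "j \<in> A" "i \<noteq> j"
      then have "i \<inter> j = {}" using AB TT_disj by blast
      then show "(i - X) \<inter> (j - X) = {}" by blast
    qed
  qed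
  have RD: "2 * (\<Sum>v\<in>N. r v) \<le> D" using M_bound[OF NVT] unfolding r_def D_def .
  have sumA: "(\<Sum>T\<in>A. phi T) \<ge> real (card A) * ((P/3) * (1 + y)) - (P * L / 12) * (\<Sum>v\<in>N. r v)"
  proof -
    have "(\<Sum>T\<in>A. (P/3) * (1 + y) - (P * L / 12) * (\<Sum>v\<in>T - X. r v)) \<le> (\<Sum>T\<in>A. phi T)"
      by (rule sum_mono) (use phiA in auto)
    moreover have "(\<Sum>T\<in>A. (P * L / 12) * (\<Sum>v\<in>T - X. r v)) = (P * L / 12) * (\<Sum>v\<in>N. r v)"
      by (simp only: sum_distrib_left[symmetric] sumR)
    moreover have "(\<Sum>T\<in>A. (P/3) * (1 + y) - (P * L / 12) * (\<Sum>v\<in>T - X. r v))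
        = real (card A) * ((P/3) * (1 + y)) - (\<Sum>T\<in>A. (P * L / 12) * (\<Sum>v\<in>T - X. r v))"
      by (simp only: sum_subtractf sum_constant)
    ultimately show ?thesis by linarith
  qed
  have sumB: "(\<Sum>T\<in>B. phi T) = real (card B) / 2"
  proof -
    have "(\<Sum>T\<in>B. phi T) = (\<Sum>T\<in>B. 1/2)"
      by (rule sum.cong) (auto simp: phi_def A_def B_def)
    then show ?thesis by simp
  qed
  have split: "(\<Sum>T\<in>TT. phi T) = (\<Sum>T\<in>A. phi T) + (\<Sum>T\<in>B. phi T)"
    using sum.union_disjoint[OF fA AB(3)] AB(4) by simp
  have ncard: "n = real (card A) + real (card B)"
    unfolding n_def using card_Un_disjoint[OF fA AB(3)] AB(4) by simp
  have PL: "P * L / 12 \<ge> 0" using Ppos Lpos by simp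
  have t1: "(P * L / 12) * (\<Sum>v\<in>N. r v) \<le> (P * L / 12) * (D / 2)"
    using RD PL by (intro mult_left_mono) auto
  have t2: "(P * L / 12) * (D / 2) = (P / 3) * y * n"
    unfolding y_def \<mu>_def using npos by (simp add: field_simps)
  have t3: "(P / 3) * (1 + y) * real (card B) \<le> real (card B) / 2"
  proof -
    have "(P / 3) * (1 + y) \<le> 1 / 2" using Py by simp
    then have "(P / 3) * (1 + y) * real (card B) \<le> 1 / 2 * real (card B)"
      by (intro mult_right_mono) auto
    then show ?thesis by simp
  qed
  have "(1/3) powr (3/8 * avg_degree VT E + 1/4) * real (card TT) = (P / 3) * n"
    unfolding pval n_def ..
  also have "\<dots> \<le> (\<Sum>T\<in>TT. phi T)"
  proof -
    have e: "(P / 3) * n = real (card A) * ((P/3) * (1 + y)) - (P / 3) * y * n + (P / 3) * (1 + y) * real (card B)"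
      unfolding ncard by (simp add: field_simps)
    show ?thesis unfolding split e using sumA sumB t1 t2 t3 by linarith
  qed
  finally show ?thesis .
qed

end

theorem lemma11:
  fixes V :: "'a set" and E :: "'a \<Rightarrow> 'a \<Rightarrow> bool"
    and \<T> :: "'a set set" and \<rho>0 :: real
    and Tp :: "('a set \<Rightarrow> 'a) \<Rightarrow> 'a set set"
    and X2 :: "('a set \<Rightarrow> 'a) \<Rightarrow> 'a set"
  assumes disk: "disk_graph V E"
    and k4: "K4_free V E"
    and opt_pos: "oct_num V E > 0"
    and maxT: "maximal_packing (triangles V E) \<T>"
    and rho: "1 \<le> \<rho>0" "\<rho>0 \<le> 3"
    and Tp: "\<And>\<sigma>. \<sigma> \<in> (\<Pi>\<^sub>E T\<in>\<T>. T) \<Longrightarrow>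
               maximal_packing (triangles (V - (\<Union>T\<in>\<T>. T - {\<sigma> T})) E) (Tp \<sigma>)"
    and X2: "\<And>\<sigma>. \<sigma> \<in> (\<Pi>\<^sub>E T\<in>\<T>. T) \<Longrightarrow>
               is_oct (V - ((\<Union>T\<in>\<T>. T - {\<sigma> T}) \<union> \<Union>(Tp \<sigma>))) E (X2 \<sigma>) \<and>
               real (card (X2 \<sigma>)) \<le>
                 \<rho>0 * real (oct_num (V - ((\<Union>T\<in>\<T>. T - {\<sigma> T}) \<union> \<Union>(Tp \<sigma>))) E)"
  shows
    "(let opt = real (oct_num V E);
          \<O> = {T \<in> triangles V E. \<not> T \<subseteq> \<Union>\<T>};
          a = real (card \<T>) / opt;
          b = real (tri_num \<O>) / opt;
          d = avg_degree (\<Union>\<T>) E;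
          S2 = (\<lambda>\<sigma>. (\<Union>T\<in>\<T>. T - {\<sigma> T}) \<union> \<Union>(Tp \<sigma>) \<union> X2 \<sigma>)
      in (\<Sum>\<sigma>\<in>(\<Pi>\<^sub>E T\<in>\<T>. T). real (card (S2 \<sigma>))) / real (card (\<Pi>\<^sub>E T\<in>\<T>. T))
         \<le> (\<rho>0 + (1 - (1/3) powr (3/8 * d + 1/4)) * (3 - \<rho>0) * a + (3 - \<rho>0) * b) * opt)"
proof -
  have finV: "finite V" using disk unfolding disk_graph_def by blast
  obtain c :: "'a \<Rightarrow> complex" and r :: "'a \<Rightarrow> real" where
    cr: "\<forall>u\<in>V. \<forall>v\<in>V. E u v \<longleftrightarrow> u \<noteq> v \<and> dist (c u) (c v) \<le> r u + r v"
    using disk unfolding disk_graph_def by blast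
  have symE: "\<And>u v. u \<in> V \<Longrightarrow> v \<in> V \<Longrightarrow> E u v = E v u"
    using cr by (metis add.commute dist_commute)
  have irrE: "\<And>v. v \<in> V \<Longrightarrow> \<not> E v v" using cr by blast
  have packT: "packing (triangles V E) \<T>" using maxT unfolding maximal_packing_def by blast
  have finO: "finite {card S |S. is_oct V E S}"
  proof -
    have "{card S |S. is_oct V E S} \<subseteq> card ` Pow V" unfolding is_oct_def by blast
    moreover have "finite (card ` Pow V)" using finV by simp
    ultimately show ?thesis by (rule finite_subset)
  qed
  have neO: "{card S |S. is_oct V E S} \<noteq> {}"
  proof -
    have "is_oct V E V" unfolding is_oct_def bipartite_def by blast
    then show ?thesis by blast
  qed
  have "oct_num V E \<in> {card S |S. is_oct V E S}" unfolding oct_num_def using finO neO by (rule Min_in)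
  then obtain X where Xoct: "is_oct V E X" and cardX: "card X = oct_num V E" by auto
  interpret L: L0 V E \<T> X \<rho>0
    by unfold_locales (use finV symE irrE k4 packT Xoct rho in auto)
  define n where "n = real (card \<T>)"
  define opt where "opt = real (oct_num V E)"
  define tri where "tri = real (tri_num {T \<in> triangles V E. \<not> T \<subseteq> \<Union>\<T>})"
  define p where "p = (1/3::real) powr (3/8 * avg_degree (\<Union>\<T>) E + 1/4)"
  define c0 where "c0 = \<rho>0 * opt + (3 - \<rho>0) * tri"
  define S2 where "S2 = (\<lambda>\<sigma>. (\<Union>T\<in>\<T>. T - {\<sigma> T}) \<union> \<Union>(Tp \<sigma>) \<union> X2 \<sigma>)"
  have OmEq: "(\<Pi>\<^sub>E T\<in>\<T>. T) = L.\<Omega>" unfolding L.\<Omega>_def ..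
  have VTeq: "L.VT = \<Union>\<T>" unfolding L.VT_def ..
  have RsEq: "L.Rs \<sigma> = (\<Union>T\<in>\<T>. T - {\<sigma> T})" for \<sigma> unfolding L.Rs_def ..
  have per: "real (card (S2 \<sigma>)) \<le> c0 + (\<Sum>T\<in>\<T>. L.Q T \<sigma>)" if s: "\<sigma> \<in> L.\<Omega>" for \<sigma>
  proof -
    have s': "\<sigma> \<in> (\<Pi>\<^sub>E T\<in>\<T>. T)" using s OmEq by simp
    have pk: "packing (triangles (V - L.Rs \<sigma>) E) (Tp \<sigma>)"
      using Tp[OF s'] unfolding maximal_packing_def RsEq by blast
    have y: "is_oct (V - (L.Rs \<sigma> \<union> \<Union>(Tp \<sigma>))) E (X2 \<sigma>)"
      "real (card (X2 \<sigma>)) \<le> \<rho>0 * real (oct_num (V - (L.Rs \<sigma> \<union> \<Union>(Tp \<sigma>))) E)"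
      using X2[OF s'] unfolding RsEq by auto
    have "real (card (L.Rs \<sigma> \<union> \<Union>(Tp \<sigma>) \<union> X2 \<sigma>)) \<le> \<rho>0 * card X
          + (3-\<rho>0) * tri_num {T \<in> triangles V E. \<not> T \<subseteq> L.VT} + (\<Sum>T\<in>\<T>. L.Q T \<sigma>)"
      by (rule L.sigma_bound[OF s pk y])
    then show ?thesis unfolding S2_def c0_def opt_def tri_def RsEq VTeq cardX .
  qed
  have fOm: "finite L.\<Omega>" by (rule L.finOmega)
  have cOm: "real (card L.\<Omega>) > 0" using L.card_Omega by simp
  have "(\<Sum>\<sigma>\<in>L.\<Omega>. real (card (S2 \<sigma>))) \<le> (\<Sum>\<sigma>\<in>L.\<Omega>. c0 + (\<Sum>T\<in>\<T>. L.Q T \<sigma>))"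
    by (rule sum_mono) (rule per)
  also have "\<dots> = real (card L.\<Omega>) * c0 + (\<Sum>T\<in>\<T>. \<Sum>\<sigma>\<in>L.\<Omega>. L.Q T \<sigma>)"
    by (simp add: sum.distrib sum.swap[of _ L.\<Omega>])
  also have "(\<Sum>T\<in>\<T>. \<Sum>\<sigma>\<in>L.\<Omega>. L.Q T \<sigma>) \<le> (\<Sum>T\<in>\<T>. real (card L.\<Omega>) * (3 - \<rho>0) * (1 - L.phi T))"
  proof (rule sum_mono)
    fix T assume T: "T \<in> \<T>"
    show "(\<Sum>\<sigma>\<in>L.\<Omega>. L.Q T \<sigma>) \<le> real (card L.\<Omega>) * (3 - \<rho>0) * (1 - L.phi T)"
    proof (cases "card (X \<inter> T) = 1")
      case True then show ?thesis using L.T_sum_A[OF T] by blast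
    next
      case False then show ?thesis using L.T_sum_B[OF T] by blast
    qed
  qed
  also have "(\<Sum>T\<in>\<T>. real (card L.\<Omega>) * (3 - \<rho>0) * (1 - L.phi T))
      = real (card L.\<Omega>) * (3 - \<rho>0) * (n - (\<Sum>T\<in>\<T>. L.phi T))"
    unfolding n_def by (simp add: sum_distrib_left[symmetric] sum_subtractf)
  also have "\<dots> \<le> real (card L.\<Omega>) * (3 - \<rho>0) * (n - p * n)"
  proof -
    have "p * n \<le> (\<Sum>T\<in>\<T>. L.phi T)" using L.phi_sum unfolding p_def n_def VTeq .
    moreover have "real (card L.\<Omega>) * (3 - \<rho>0) \<ge> 0" using cOm rho by simp
    ultimately show ?thesis by (intro mult_left_mono) auto
  qed
  finally have tot: "(\<Sum>\<sigma>\<in>L.\<Omega>. real (card (S2 \<sigma>))) \<le> real (card L.\<Omega>) * (c0 + (3 - \<rho>0) * (n - p * n))"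
    by (simp add: algebra_simps)
  have avg: "(\<Sum>\<sigma>\<in>L.\<Omega>. real (card (S2 \<sigma>))) / real (card L.\<Omega>) \<le> c0 + (3 - \<rho>0) * (n - p * n)"
    using tot cOm by (simp add: divide_le_eq mult.commute)
  have optpos: "opt > 0" unfolding opt_def using opt_pos by simp
  have rhs: "(\<rho>0 + (1 - p) * (3 - \<rho>0) * (n / opt) + (3 - \<rho>0) * (tri / opt)) * opt = c0 + (3 - \<rho>0) * (n - p * n)"
    unfolding c0_def using optpos by (simp add: field_simps)
  show ?thesis unfolding Let_def OmEq
    using avg rhs unfolding S2_def n_def opt_def tri_def p_def by simp
qed

end
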